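(* Let $\mu$ be a positive finite Borel measure on $[0,1)$. The following are equivalent: (i) the operators $H_\mu:A(\mathbb{T})\to A(\mathbb{T})$ and $C_\mu:A(\mathbb{T})\to A(\mathbb{T})$ are well defined; (ii) the operators $H_\mu:A(\mathbb{T})\to A(\mathbb{T})$ and $C_\mu:A(\mathbb{T})\to A(\mathbb{T})$ are nuclear; (iii) $\sum_{n=0}^\infty\mu_n<\infty$.
   Context: $A(\mathbb{T})$ is the Wiener algebra, identified with $\ell^1_A=\{f(z)=\sum_{n\ge0}a_nz^n: \|f\|_1=\sum_n|a_n|<\infty\}$, i.e. with the sequence space $\ell^1$ of Taylor coefficients. $\mu_n=\int_0^1t^n\,d\mu(t)$. On coefficient sequences, $H_\mu((a_n)_{n\ge0})=\left(\sum_{n=0}^\infty\mu_{n+k}a_n\right)_{k\ge0}$ and $C_\mu((a_n)_{n\ge0})=\left(\mu_k\sum_{n=0}^k a_n\right)_{k\ge0}$ (Cesàro-type operator). An operator $T:X\to Y$ between Banach spaces is nuclear if there exist $(x_n^* )\subseteq X^*$, $(y_n)\subseteq Y$ with $\sum_n\|x_n^*\|\|y_n\|<\infty$ and $T=\sum_n x_n^*(\cdot)y_n$. *)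

theory Defs
  imports "HOL-Analysis.Analysis" "HOL-Probability.Probability"
begin

text \<open>Wiener algebra A(T), identified with the space l^1 of Taylor coefficient sequences.\<close>
definition l1 :: "(nat \<Rightarrow> complex) set" where
  "l1 = {a. summable (\<lambda>n. norm (a n))}"

definition l1norm :: "(nat \<Rightarrow> complex) \<Rightarrow> real" where
  "l1norm a = (\<Sum>n. norm (a n))"

definition mom :: "real measure \<Rightarrow> nat \<Rightarrow> real" where
  "mom M n = (\<integral>t. t ^ n \<partial>M)"

definition Hmu :: "real measure \<Rightarrow> (nat \<Rightarrow> complex) \<Rightarrow> (nat \<Rightarrow> complex)" where
  "Hmu M a = (\<lambda>k. \<Sum>n. complex_of_real (mom M (n + k)) * a n)"

definition Cmu :: "real measure \<Rightarrow> (nat \<Rightarrow> complex) \<Rightarrow> (nat \<Rightarrow> complex)" where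
  "Cmu M a = (\<lambda>k. complex_of_real (mom M k) * (\<Sum>n\<le>k. a n))"

definition H_well_defined :: "real measure \<Rightarrow> bool" where
  "H_well_defined M \<longleftrightarrow> (\<forall>a\<in>l1. (\<forall>k. summable (\<lambda>n. complex_of_real (mom M (n + k)) * a n))
                                    \<and> Hmu M a \<in> l1)"

definition C_well_defined :: "real measure \<Rightarrow> bool" where
  "C_well_defined M \<longleftrightarrow> (\<forall>a\<in>l1. Cmu M a \<in> l1)"

definition l1_functional :: "((nat \<Rightarrow> complex) \<Rightarrow> complex) \<Rightarrow> bool" where
  "l1_functional f \<longleftrightarrow>
     (\<forall>a\<in>l1. \<forall>b\<in>l1. f (\<lambda>n. a n + b n) = f a + f b) \<and>
     (\<forall>a\<in>l1. \<forall>c. f (\<lambda>n. c * a n) = c * f a) \<and>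
     (\<exists>C. \<forall>a\<in>l1. norm (f a) \<le> C * l1norm a)"

definition dual_norm :: "((nat \<Rightarrow> complex) \<Rightarrow> complex) \<Rightarrow> real" where
  "dual_norm f = Sup {norm (f a) | a. a \<in> l1 \<and> l1norm a \<le> 1}"

definition nuclear_l1 :: "((nat \<Rightarrow> complex) \<Rightarrow> (nat \<Rightarrow> complex)) \<Rightarrow> bool" where
  "nuclear_l1 T \<longleftrightarrow>
     (\<forall>a\<in>l1. T a \<in> l1) \<and>
     (\<exists>xs ys. (\<forall>n. l1_functional (xs n)) \<and> (\<forall>n. ys n \<in> l1) \<and>
        summable (\<lambda>n. dual_norm (xs n) * l1norm (ys n)) \<and>
        (\<forall>a\<in>l1. (\<lambda>N. l1norm (\<lambda>k. T a k - (\<Sum>n<N. xs n a * ys n k))) \<longlonglongrightarrow> 0))"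

end

theory Submission
  imports Defs
begin

lemma zero_l1: "(\<lambda>n. 0::complex) \<in> l1" by (simp add: l1_def)
lemma l1norm_zero: "l1norm (\<lambda>n. 0::complex) = 0" by (simp add: l1norm_def)
lemma l1norm_nonneg: "a \<in> l1 \<Longrightarrow> 0 \<le> l1norm a"
  unfolding l1norm_def l1_def by (simp add: suminf_nonneg)

lemma nuclear_diag:
  fixes T :: "(nat \<Rightarrow> complex) \<Rightarrow> (nat \<Rightarrow> complex)" and w :: "nat \<Rightarrow> real"
  assumes w: "summable w" "\<And>k. 0 \<le> w k"
    and lin_add: "\<And>k a b. a\<in>l1 \<Longrightarrow> b\<in>l1 \<Longrightarrow> T (\<lambda>n. a n + b n) k = T a k + T b k"
    and lin_mult: "\<And>k a c. a\<in>l1 \<Longrightarrow> T (\<lambda>n. c * a n) k = c * T a k"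
    and bnd: "\<And>k a. a\<in>l1 \<Longrightarrow> norm (T a k) \<le> w k * l1norm a"
  shows "nuclear_l1 T"
proof -
  have sumT: "summable (\<lambda>k. norm (T a k))" if "a \<in> l1" for a
    by (rule summable_comparison_test[where g="\<lambda>k. w k * l1norm a"])
       (use bnd that w in \<open>auto intro: summable_mult2\<close>)
  define xs where "xs k = (\<lambda>a. T a k)" for k
  define ys where "ys k = (\<lambda>j::nat. if j = k then 1 else 0 :: complex)" for k
  have ys1: "l1norm (ys k) = 1" for k
  proof -
    have "(\<lambda>n. norm (ys k n)) = (\<lambda>n. if n = k then 1 else 0)" by (auto simp: ys_def)
    then show ?thesis unfolding l1norm_def using sums_single[of k "\<lambda>_. 1::real"]
      by (simp add: sums_iff)
  qed
  have ysl1: "ys k \<in> l1" for k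
  proof -
    have "(\<lambda>n. norm (ys k n)) = (\<lambda>n. if n = k then 1 else 0)" by (auto simp: ys_def)
    then show ?thesis unfolding l1_def by simp
  qed
  have func: "l1_functional (xs k)" for k
    unfolding l1_functional_def xs_def using lin_add lin_mult bnd by blast
  have dn: "0 \<le> dual_norm (xs k) \<and> dual_norm (xs k) \<le> w k" for k
  proof -
    let ?S = "{norm (xs k a) | a. a \<in> l1 \<and> l1norm a \<le> 1}"
    have ub: "x \<le> w k" if "x \<in> ?S" for x
    proof -
      obtain a where a: "x = norm (xs k a)" "a \<in> l1" "l1norm a \<le> 1" using \<open>x \<in> ?S\<close> by blast
      have "norm (xs k a) \<le> w k * l1norm a" using bnd a by (simp add: xs_def)
      also have "\<dots> \<le> w k" using a w(2)[of k] by (simp add: mult_left_le)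
      finally show ?thesis using a by simp
    qed
    have mem: "norm (xs k (\<lambda>n. 0)) \<in> ?S" using zero_l1 l1norm_zero by force
    have bdd: "bdd_above ?S" using ub by (auto simp: bdd_above_def)
    have "0 \<le> norm (xs k (\<lambda>n. 0))" by simp
    also have "\<dots> \<le> Sup ?S" by (rule cSup_upper[OF mem bdd])
    finally have "0 \<le> dual_norm (xs k)" unfolding dual_norm_def .
    moreover have "dual_norm (xs k) \<le> w k" unfolding dual_norm_def
      by (rule cSup_least) (use mem ub in blast)+
    ultimately show ?thesis by blast
  qed
  have summ: "summable (\<lambda>n. dual_norm (xs n) * l1norm (ys n))"
    by (rule summable_comparison_test[where g=w]) (use dn ys1 w in auto)
  have conv: "(\<lambda>N. l1norm (\<lambda>k. T a k - (\<Sum>n<N. xs n a * ys n k))) \<longlonglongrightarrow> 0" if a: "a \<in> l1" for a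
  proof -
    define g where "g = (\<lambda>k. norm (T a k))"
    have gs: "summable g" using sumT[OF a] unfolding g_def .
    have eq: "l1norm (\<lambda>k. T a k - (\<Sum>n<N. xs n a * ys n k)) = suminf g - (\<Sum>k<N. g k)" for N
    proof -
      have e1: "(\<lambda>k. norm (T a k - (\<Sum>n<N. xs n a * ys n k))) = (\<lambda>k. g k - (if k \<in> {..<N} then g k else 0))"
      proof
        fix k
        have "(\<Sum>n<N. xs n a * ys n k) = (if k \<in> {..<N} then T a k else 0)"
          unfolding xs_def ys_def by (simp add: if_distrib[of "\<lambda>x. T a _ * x"] sum.delta cong: if_cong)
        then show "norm (T a k - (\<Sum>n<N. xs n a * ys n k)) = g k - (if k \<in> {..<N} then g k else 0)"
          by (simp add: g_def)
      qed
      have "(\<lambda>k. g k - (if k \<in> {..<N} then g k else 0)) sums (suminf g - (\<Sum>k<N. g k))"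
        by (intro sums_diff summable_sums gs sums_If_finite_set) auto
      then show ?thesis unfolding l1norm_def e1 by (simp add: sums_iff)
    qed
    have "(\<lambda>N. suminf g - (\<Sum>k<N. g k)) \<longlonglongrightarrow> suminf g - suminf g"
      by (intro tendsto_intros summable_LIMSEQ gs)
    then show ?thesis unfolding eq by simp
  qed
  show ?thesis unfolding nuclear_l1_def
    using sumT func ysl1 summ conv by (auto simp: l1_def)
qed


lemma mom_facts:
  fixes M :: "real measure"
  assumes sM: "sets M = sets (restrict_space borel {0..<1::real})"
    and fM: "finite_measure M"
  shows "0 \<le> mom M n" and "mom M (n + k) \<le> mom M k"
proof -
  interpret finite_measure M by (rule fM)
  have sp: "space M = {0..<1}"
    using sets_eq_imp_space_eq[OF sM] by (simp add: space_restrict_space)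
  have meas: "(\<lambda>t. t ^ m) \<in> borel_measurable M" for m
  proof -
    have "(\<lambda>t::real. t ^ m) \<in> borel_measurable (restrict_space borel {0..<1::real})"
      by (intro measurable_restrict_space1) simp
    then show ?thesis unfolding measurable_cong_sets[OF sM refl] .
  qed
  have int: "integrable M (\<lambda>t. t ^ m)" for m
    by (rule integrable_const_bound[where B=1]) (auto simp: sp power_le_one meas intro!: AE_I2)
  show "0 \<le> mom M n" unfolding mom_def
    by (rule Bochner_Integration.integral_nonneg) (auto simp: sp)
  show "mom M (n + k) \<le> mom M k" unfolding mom_def
    by (rule integral_mono[OF int int]) (auto simp: sp power_add mult_left_le_one_le mult_le_one power_le_one mult.commute intro: mult_left_le)
qed


theorem theorem31:
  fixes M :: "real measure"
  assumes "sets M = sets (restrict_space borel {0..<1::real})"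
    and "finite_measure M"
  shows "((H_well_defined M \<and> C_well_defined M) \<longleftrightarrow>
            (H_well_defined M \<and> nuclear_l1 (Hmu M) \<and> C_well_defined M \<and> nuclear_l1 (Cmu M)))
       \<and> ((H_well_defined M \<and> nuclear_l1 (Hmu M) \<and> C_well_defined M \<and> nuclear_l1 (Cmu M)) \<longleftrightarrow>
            summable (mom M))"
proof -
  have pos: "0 \<le> mom M n" for n using mom_facts[OF assms] by blast
  have dec: "mom M (n + k) \<le> mom M k" for n k using mom_facts[OF assms] by blast
  have Hn: "summable (\<lambda>n. norm (complex_of_real (mom M (n + k)) * a n))" if a: "a \<in> l1" for a k
  proof (rule summable_comparison_test[where g="\<lambda>n. mom M k * norm (a n)"])
    show "\<exists>N. \<forall>n\<ge>N. norm (norm (complex_of_real (mom M (n + k)) * a n)) \<le> mom M k * norm (a n)"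
      using pos dec by (auto simp: norm_mult intro!: mult_right_mono)
    show "summable (\<lambda>n. mom M k * norm (a n))" using a by (auto simp: l1_def intro: summable_mult)
  qed
  have Hs: "summable (\<lambda>n. complex_of_real (mom M (n + k)) * a n)" if a: "a \<in> l1" for a k
    using summable_norm_cancel[OF Hn[OF a]] .
  have Hb: "norm (Hmu M a k) \<le> mom M k * l1norm a" if a: "a \<in> l1" for a k
  proof -
    have sa: "summable (\<lambda>n. norm (a n))" using a by (simp add: l1_def)
    have "norm (Hmu M a k) \<le> (\<Sum>n. norm (complex_of_real (mom M (n + k)) * a n))"
      unfolding Hmu_def by (rule summable_norm[OF Hn[OF a]])
    also have "\<dots> \<le> (\<Sum>n. mom M k * norm (a n))"
      apply (rule suminf_le)
      using pos dec sa Hn[OF a] by (auto simp: norm_mult intro!: mult_right_mono summable_mult)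
    also have "\<dots> = mom M k * l1norm a" unfolding l1norm_def by (rule suminf_mult[OF sa])
    finally show ?thesis .
  qed
  have Cb: "norm (Cmu M a k) \<le> mom M k * l1norm a" if a: "a \<in> l1" for a k
  proof -
    have sa: "summable (\<lambda>n. norm (a n))" using a by (simp add: l1_def)
    have "norm (\<Sum>n\<le>k. a n) \<le> (\<Sum>n\<le>k. norm (a n))" by (rule norm_sum)
    also have "\<dots> \<le> l1norm a" unfolding l1norm_def by (rule sum_le_suminf[OF sa]) auto
    finally have "norm (\<Sum>n\<le>k. a n) \<le> l1norm a" .
    then show ?thesis unfolding Cmu_def using pos[of k] by (simp add: norm_mult mult_left_mono)
  qed
  have key: "H_well_defined M \<and> nuclear_l1 (Hmu M) \<and> C_well_defined M \<and> nuclear_l1 (Cmu M)"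
    if sm: "summable (mom M)"
  proof -
    have nH: "nuclear_l1 (Hmu M)"
    proof (rule nuclear_diag[OF sm pos])
      show "Hmu M (\<lambda>n. a n + b n) k = Hmu M a k + Hmu M b k" if "a \<in> l1" "b \<in> l1" for k a b
        unfolding Hmu_def using suminf_add[OF Hs[OF that(1)] Hs[OF that(2)], of k]
        by (simp add: distrib_left)
      show "Hmu M (\<lambda>n. c * a n) k = c * Hmu M a k" if "a \<in> l1" for k a c
        unfolding Hmu_def using suminf_mult[OF Hs[OF that], of c, symmetric]
        by (simp add: mult.left_commute)
      show "norm (Hmu M a k) \<le> mom M k * l1norm a" if "a \<in> l1" for k a using Hb[OF that] .
    qed
    have nC: "nuclear_l1 (Cmu M)"
    proof (rule nuclear_diag[OF sm pos])
      show "Cmu M (\<lambda>n. a n + b n) k = Cmu M a k + Cmu M b k" for k a b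
        unfolding Cmu_def by (simp add: sum.distrib distrib_left)
      show "Cmu M (\<lambda>n. c * a n) k = c * Cmu M a k" for k a c
        unfolding Cmu_def by (simp add: sum_distrib_left mult.left_commute)
      show "norm (Cmu M a k) \<le> mom M k * l1norm a" if "a \<in> l1" for k a using Cb[OF that] .
    qed
    have "H_well_defined M" unfolding H_well_defined_def
      using Hs nH by (auto simp: nuclear_l1_def)
    moreover have "C_well_defined M" unfolding C_well_defined_def
      using nC by (auto simp: nuclear_l1_def)
    ultimately show ?thesis using nH nC by blast
  qed
  have bk: "summable (mom M)" if hC: "C_well_defined M"
  proof -
    define e0 where "e0 = (\<lambda>n::nat. if n = 0 then 1 else 0 :: complex)"
    have "(\<lambda>n. norm (e0 n)) = (\<lambda>n. if n = 0 then 1 else 0)" by (auto simp: e0_def)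
    then have "e0 \<in> l1" unfolding l1_def by simp
    then have "Cmu M e0 \<in> l1" using hC by (simp add: C_well_defined_def)
    moreover have "Cmu M e0 = (\<lambda>k. complex_of_real (mom M k))"
      by (auto simp: Cmu_def e0_def)
    ultimately have "summable (\<lambda>k. norm (complex_of_real (mom M k)))" by (simp add: l1_def)
    then show ?thesis using pos by simp
  qed
  show ?thesis using key bk by blast
qed

end
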